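(* Let $n\ge1$ and $\gamma=1$ (so $\beta=2$). There exist no $\ell,R>0$ and $U:[0,R]\to[0,\infty)$, continuous on $[0,R]$ and $C^2$ on $[0,R)$, such that $$U''+\Big(\frac{n-1}{r}-\frac r2\Big)U'+U=1\ \text{ in }(0,R),\quad U(0)=\ell,\ U'(0)=0,\quad U(R)=0,\ (U^{1/2})'(R)=-\frac{\sqrt2}{2}.$$
   Context: $(U^{1/2})'(R)$ is the left derivative at $R$, i.e. $\lim_{r\uparrow R}U^{1/2}(r)/(r-R)$. *)

theory Defs
  imports "HOL-Analysis.Analysis"
begin

end

theory Submission
  imports Defs
begin

lemma const_on_interval:
  fixes f :: "real \<Rightarrow> real"
  assumes "\<And>x. a < x \<Longrightarrow> x < b \<Longrightarrow> DERIV f x :> 0"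
    and "a < r" "r < b" "a < m" "m < b"
  shows "f r = f m"
proof -
  have cont: "continuous_on {x..y} f" if "a < x" "y < b" for x y
    using assms(1) that
    by (intro continuous_at_imp_continuous_on ballI) (meson DERIV_isCont assms(1) atLeastAtMost_iff less_le_trans le_less_trans that)
  show ?thesis
  proof (cases "r \<le> m")
    case True
    show ?thesis
    proof (cases "r = m")
      case False
      with True have "r < m" by simp
      have "f m = f r"
        by (rule DERIV_isconst2[of r m f m]) (use \<open>r<m\<close> cont assms in auto)
      then show ?thesis by simp
    qed simp
  next
    case False
    then have "m < r" by simp
    show "f r = f m"
      by (rule DERIV_isconst2[of m r f r]) (use \<open>m<r\<close> cont assms in auto)
  qed
qed

lemma wronsk_alg:
  fixes u u1 u2 p r nn :: real
  assumes h: "u2 = 1 - u - p * u1" "p * r = nn - 1 - r^2/2"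
  shows "u1 * (- 2 * r) + (u - 1) * (- 2) - (u2 * (2*nn - r^2) + u1 * (- 2 * r)) = - p * ((u - 1) * (- 2 * r) - u1 * (2*nn - r^2))"
proof -
  have "u1 * (- 2 * r) + (u - 1) * (- 2) - (u2 * (2*nn - r^2) + u1 * (- 2 * r)) - (- p * ((u - 1) * (- 2 * r) - u1 * (2*nn - r^2)))
    = (u - 1) * (2*nn - 2 - r^2 - 2 * (p * r))" unfolding h(1) by (simp add: algebra_simps)
  also have "\<dots> = 0" unfolding h(2) by simp
  finally show ?thesis by simp
qed

theorem lemma6p9:
  fixes n :: nat
  assumes "n \<ge> 1"
  shows "\<not> (\<exists>(l::real) (R::real) (U::real \<Rightarrow> real) U' U''.
            l > 0 \<and> R > 0 \<and>
            (\<forall>r\<in>{0..R}. U r \<ge> 0) \<and>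
            continuous_on {0..R} U \<and>
            (\<forall>r\<in>{0..<R}. (U has_real_derivative U' r) (at r within {0..<R})) \<and>
            (\<forall>r\<in>{0..<R}. (U' has_real_derivative U'' r) (at r within {0..<R})) \<and>
            continuous_on {0..<R} U'' \<and>
            (\<forall>r\<in>{0<..<R}. U'' r + ((real n - 1) / r - r / 2) * U' r + U r = 1) \<and>
            U 0 = l \<and> U' 0 = 0 \<and> U R = 0 \<and>
            ((\<lambda>r. sqrt (U r) / (r - R)) \<longlongrightarrow> - sqrt 2 / 2) (at_left R))"
proof
  assume "\<exists>(l::real) (R::real) (U::real \<Rightarrow> real) U' U''.
            l > 0 \<and> R > 0 \<and>
            (\<forall>r\<in>{0..R}. U r \<ge> 0) \<and>
            continuous_on {0..R} U \<and>
            (\<forall>r\<in>{0..<R}. (U has_real_derivative U' r) (at r within {0..<R})) \<and>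
            (\<forall>r\<in>{0..<R}. (U' has_real_derivative U'' r) (at r within {0..<R})) \<and>
            continuous_on {0..<R} U'' \<and>
            (\<forall>r\<in>{0<..<R}. U'' r + ((real n - 1) / r - r / 2) * U' r + U r = 1) \<and>
            U 0 = l \<and> U' 0 = 0 \<and> U R = 0 \<and>
            ((\<lambda>r. sqrt (U r) / (r - R)) \<longlongrightarrow> - sqrt 2 / 2) (at_left R)"
  then obtain l R U U' U'' where
    lpos: "l > 0" and Rpos: "R > 0" and Unn: "\<forall>r\<in>{0..R}. U r \<ge> 0"
    and Ucont: "continuous_on {0..R} U"
    and dU: "\<forall>r\<in>{0..<R}. (U has_real_derivative U' r) (at r within {0..<R})"
    and dU': "\<forall>r\<in>{0..<R}. (U' has_real_derivative U'' r) (at r within {0..<R})"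
    and ode: "\<forall>r\<in>{0<..<R}. U'' r + ((real n - 1) / r - r / 2) * U' r + U r = 1"
    and U0: "U 0 = l" and U'0: "U' 0 = 0" and UR: "U R = 0"
    and lim: "((\<lambda>r. sqrt (U r) / (r - R)) \<longlongrightarrow> - sqrt 2 / 2) (at_left R)"
    by blast
  define p where "p r = (real n - 1) / r - r / 2" for r :: real
  define \<phi> where "\<phi> r = 2 * real n - r\<^sup>2" for r :: real
  define w where "w r = (U r - 1) * (- 2 * r) - U' r * \<phi> r" for r
  define E where "E r = r ^ (n - 1) * exp (- (r\<^sup>2) / 4)" for r :: real
  define h where "h r = E r * w r" for r
  have atU: "(U has_real_derivative U' r) (at r)" if "0 < r" "r < R" for r
  proof -
    have "r \<in> {0..<R}" using that by simp
    then have "(U has_real_derivative U' r) (at r within {0..<R})" using dU by blast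
    moreover have "at r within {0..<R} = at r"
      by (rule at_within_open_subset[where S="{0<..<R}"]) (use that in auto)
    ultimately show ?thesis by simp
  qed
  have atU': "(U' has_real_derivative U'' r) (at r)" if "0 < r" "r < R" for r
  proof -
    have "r \<in> {0..<R}" using that by simp
    then have "(U' has_real_derivative U'' r) (at r within {0..<R})" using dU' by blast
    moreover have "at r within {0..<R} = at r"
      by (rule at_within_open_subset[where S="{0<..<R}"]) (use that in auto)
    ultimately show ?thesis by simp
  qed
  have cU: "continuous_on {0..<R} U"
    using dU by (auto simp: continuous_on_eq_continuous_within intro: DERIV_continuous)
  have cU': "continuous_on {0..<R} U'"
    using dU' by (auto simp: continuous_on_eq_continuous_within intro: DERIV_continuous)
  have ch: "continuous_on {0..<R} h"
    unfolding h_def E_def w_def \<phi>_def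
    by (intro continuous_intros cU cU') auto
  have Epow: "real (n - 1) * r ^ (n - 1 - 1) = r ^ (n - 1) * ((real n - 1) / r)" if "r > 0" for r :: real
  proof (cases "n = 1")
    case False
    then have "n - 1 = Suc (n - 1 - 1)" using assms by simp
    then have "r ^ (n - 1) = r * r ^ (n - 1 - 1)" by (metis power_Suc)
    then show ?thesis using that assms by (simp add: of_nat_diff field_simps)
  qed simp
  have dE: "(E has_real_derivative p r * E r) (at r)" if "r > 0" for r
  proof -
    have "(E has_real_derivative (real (n - 1) * r ^ (n - 1 - 1)) * exp (- (r\<^sup>2) / 4)
           + r ^ (n - 1) * (exp (- (r\<^sup>2) / 4) * (- (2 * r) / 4))) (at r)"
      unfolding E_def
      by (auto intro!: derivative_eq_intros simp: power2_eq_square)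
    moreover have "(real (n - 1) * r ^ (n - 1 - 1)) * exp (- (r\<^sup>2) / 4)
           + r ^ (n - 1) * (exp (- (r\<^sup>2) / 4) * (- (2 * r) / 4)) = p r * E r"
      unfolding Epow[OF that] p_def E_def by (simp add: field_simps)
    ultimately show ?thesis by simp
  qed
  have dw: "(w has_real_derivative - p r * w r) (at r)" if "0 < r" "r < R" for r
  proof -
    have "(w has_real_derivative U' r * (- 2 * r) + (U r - 1) * (- 2) - (U'' r * \<phi> r + U' r * (- 2 * r))) (at r)"
      unfolding w_def \<phi>_def
      by (auto intro!: derivative_eq_intros atU atU' that simp: power2_eq_square)
    moreover have "U'' r = 1 - U r - p r * U' r"
    proof -
      have "U'' r + p r * U' r + U r = 1" using ode that unfolding p_def by auto
      then show ?thesis by linarith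
    qed
    moreover have "p r * r = real n - 1 - r\<^sup>2 / 2" using that unfolding p_def
      by (simp add: field_simps power2_eq_square)
    ultimately show ?thesis unfolding w_def \<phi>_def
      using wronsk_alg[of "U'' r" "U r" "p r" "U' r" r "real n"] by simp
  qed
  have dh: "(h has_real_derivative 0) (at r)" if "0 < r" "r < R" for r
  proof -
    have "((\<lambda>r. E r * w r) has_real_derivative E r * (- p r * w r) + p r * E r * w r) (at r)"
      by (rule DERIV_mult'[OF dE dw]) (use that in auto)
    then have "(h has_real_derivative E r * (- p r * w r) + p r * E r * w r) (at r)"
      unfolding h_def by simp
    then show ?thesis by simp
  qed
  have h0: "h 0 = 0" unfolding h_def w_def \<phi>_def using U'0 by simp
  have w0: "w r = 0" if "0 < r" "r < R" for r
  proof -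
    have "h r = h 0"
      by (rule DERIV_isconst2[of 0 r h r]) (use that dh in \<open>auto intro: continuous_on_subset[OF ch]\<close>)
    then have "E r * w r = 0" using h0 unfolding h_def by simp
    moreover have "E r > 0" unfolding E_def using that by simp
    ultimately show ?thesis by simp
  qed
  define a where "a = (if R\<^sup>2 > 2 * real n then sqrt (2 * real n) else 0)"
  have sq: "sqrt (2 * real n) < R" if "2 * real n < R\<^sup>2"
  proof -
    have "sqrt (2 * real n) < sqrt (R\<^sup>2)" using that by (rule real_sqrt_less_mono)
    then show ?thesis using Rpos by simp
  qed
  have a: "0 \<le> a" "a < R" unfolding a_def using Rpos sq by auto
  have phinz: "\<phi> r \<noteq> 0" if "a < r" "r < R" for r
  proof -
    have "r\<^sup>2 \<noteq> 2 * real n"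
    proof (cases "R\<^sup>2 > 2 * real n")
      case True
      then have "sqrt (2 * real n) < r" using that a_def by simp
      then have "(sqrt (2 * real n))\<^sup>2 < r\<^sup>2"
        by (intro power_strict_mono) auto
      then have "2 * real n < r\<^sup>2" by simp
      then show ?thesis by simp
    next
      case False
      have "r\<^sup>2 < R\<^sup>2" using that a by (intro power_strict_mono) auto
      then show ?thesis using False by simp
    qed
    then show ?thesis unfolding \<phi>_def by simp
  qed
  define q where "q r = (U r - 1) / \<phi> r" for r
  have dq: "(q has_real_derivative 0) (at r)" if "a < r" "r < R" for r
  proof -
    have r0: "0 < r" using that a by simp
    have "(q has_real_derivative (U' r * \<phi> r - (U r - 1) * (- 2 * r)) / (\<phi> r)\<^sup>2) (at r)"
      unfolding q_def using phinz[OF that] unfolding \<phi>_def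
      by (auto intro!: derivative_eq_intros atU r0 that simp: power2_eq_square)
    moreover have "U' r * \<phi> r - (U r - 1) * (- 2 * r) = 0"
      using w0[OF r0 \<open>r<R\<close>] unfolding w_def by simp
    ultimately show ?thesis by simp
  qed
  define m where "m = (a + R) / 2"
  define c where "c = q m"
  have Ueq: "U r = 1 + c * \<phi> r" if "a < r" "r < R" for r
  proof -
    have "q r = q m"
      by (rule const_on_interval[OF dq]) (use that a in \<open>auto simp: m_def\<close>)
    then show ?thesis using phinz[OF that] unfolding c_def q_def by (simp add: field_simps)
  qed
  have ev: "eventually (\<lambda>r. a < r \<and> r < R) (at_left R)"
    using eventually_at_left_real[OF a(2)] by simp
  have UL: "(U \<longlongrightarrow> U R) (at_left R)"
  proof -
    have "(U \<longlongrightarrow> U R) (at R within {0..R})"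
      using Ucont Rpos by (simp add: continuous_on_def)
    then show ?thesis using Rpos by (simp add: at_within_Icc_at_left)
  qed
  have "((\<lambda>r. 1 + c * \<phi> r) \<longlongrightarrow> U R) (at_left R)"
    by (rule Lim_transform_eventually[OF UL]) (use ev Ueq in \<open>auto elim: eventually_mono\<close>)
  moreover have "((\<lambda>r. 1 + c * \<phi> r) \<longlongrightarrow> 1 + c * \<phi> R) (at_left R)"
    unfolding \<phi>_def by (intro tendsto_intros)
  ultimately have cR: "1 + c * \<phi> R = 0"
    using UR tendsto_unique[OF trivial_limit_at_left_real] by metis
  have Ueq2: "U r = c * (R + r) * (R - r)" if "a < r" "r < R" for r
    using Ueq[OF that] cR unfolding \<phi>_def by (simp add: algebra_simps power2_eq_square)
  have "((\<lambda>r. (sqrt (U r) / (r - R))\<^sup>2 * (R - r)) \<longlongrightarrow> (- sqrt 2 / 2)\<^sup>2 * (R - R)) (at_left R)"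
    by (intro tendsto_intros lim)
  then have L1: "((\<lambda>r. (sqrt (U r) / (r - R))\<^sup>2 * (R - r)) \<longlongrightarrow> 0) (at_left R)" by simp
  have "eventually (\<lambda>r. (sqrt (U r) / (r - R))\<^sup>2 * (R - r) = c * (R + r)) (at_left R)"
    using ev
  proof (rule eventually_mono)
    fix r assume r: "a < r \<and> r < R"
    have "U r \<ge> 0" using Unn r a by auto
    then have "(sqrt (U r) / (r - R))\<^sup>2 = U r / (R - r)\<^sup>2"
      by (simp add: power_divide power2_commute)
    then have "(sqrt (U r) / (r - R))\<^sup>2 * (R - r) = U r / (R - r)"
      using r by (simp add: power2_eq_square)
    also have "\<dots> = c * (R + r)" using Ueq2[of r] r by simp
    finally show "(sqrt (U r) / (r - R))\<^sup>2 * (R - r) = c * (R + r)" .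
  qed
  then have "((\<lambda>r. c * (R + r)) \<longlongrightarrow> 0) (at_left R)"
    using L1 Lim_transform_eventually by fastforce
  moreover have "((\<lambda>r. c * (R + r)) \<longlongrightarrow> c * (R + R)) (at_left R)"
    by (intro tendsto_intros)
  ultimately have "c * (R + R) = 0"
    using tendsto_unique[OF trivial_limit_at_left_real] by metis
  then have "c = 0" using Rpos by simp
  then show False using cR by simp
qed

end
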